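(* Let $L$ be a finite-dimensional Lie algebra over a field $F$ and let $M$ be a maximal subalgebra of $L$. Then the index complex $I(M)$ is non-empty; in fact, $I(M)$ contains an ideal of $L$.
   Context: For a nonzero subalgebra $B$ of $L$, the strict core $k(B)=k_L(B)$ is the sum of all ideals of $L$ that are proper subalgebras of $B$ (it is $0$ if there are none). A subalgebra $C$ of $L$ is a completion of the maximal subalgebra $M$ if $C\not\subseteq M$ but every proper subalgebra of $C$ that is an ideal of $L$ is contained in $M$ (equivalently, $C\not\subseteq M$ and $k(C)\subseteq M$). The index complex $I(M)$ is the set of all completions of $M$ in $L$. *)

theory Defs
  imports Complex_Main
begin

text \<open>A finite-dimensional Lie algebra over a field 'k: the whole type 'v is L,
  with scalar multiplication scale and Lie bracket br.\<close>

definition lie_algebra :: "('k::field \<Rightarrow> 'v::ab_group_add \<Rightarrow> 'v) \<Rightarrow> ('v \<Rightarrow> 'v \<Rightarrow> 'v) \<Rightarrow> bool" where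
  "lie_algebra scale br \<longleftrightarrow>
     vector_space scale \<and>
     (\<forall>x. Vector_Spaces.linear scale scale (br x)) \<and>
     (\<forall>y. Vector_Spaces.linear scale scale (\<lambda>x. br x y)) \<and>
     (\<forall>x. br x x = 0) \<and>
     (\<forall>x y z. br x (br y z) + br y (br z x) + br z (br x y) = 0)"

definition fin_dim :: "('k::field \<Rightarrow> 'v::ab_group_add \<Rightarrow> 'v) \<Rightarrow> bool" where
  "fin_dim scale \<longleftrightarrow> (\<exists>B. finite B \<and> module.span scale B = UNIV)"

definition lie_subalgebra :: "('k::field \<Rightarrow> 'v::ab_group_add \<Rightarrow> 'v) \<Rightarrow> ('v \<Rightarrow> 'v \<Rightarrow> 'v) \<Rightarrow> 'v set \<Rightarrow> bool" where
  "lie_subalgebra scale br S \<longleftrightarrow> module.subspace scale S \<and> (\<forall>x\<in>S. \<forall>y\<in>S. br x y \<in> S)"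

definition lie_ideal :: "('k::field \<Rightarrow> 'v::ab_group_add \<Rightarrow> 'v) \<Rightarrow> ('v \<Rightarrow> 'v \<Rightarrow> 'v) \<Rightarrow> 'v set \<Rightarrow> bool" where
  "lie_ideal scale br I \<longleftrightarrow> module.subspace scale I \<and> (\<forall>x. \<forall>y\<in>I. br x y \<in> I)"

definition maximal_subalgebra :: "('k::field \<Rightarrow> 'v::ab_group_add \<Rightarrow> 'v) \<Rightarrow> ('v \<Rightarrow> 'v \<Rightarrow> 'v) \<Rightarrow> 'v set \<Rightarrow> bool" where
  "maximal_subalgebra scale br M \<longleftrightarrow> lie_subalgebra scale br M \<and> M \<noteq> UNIV \<and>
     (\<forall>S. lie_subalgebra scale br S \<and> M \<subseteq> S \<longrightarrow> S = M \<or> S = UNIV)"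

definition completion :: "('k::field \<Rightarrow> 'v::ab_group_add \<Rightarrow> 'v) \<Rightarrow> ('v \<Rightarrow> 'v \<Rightarrow> 'v) \<Rightarrow> 'v set \<Rightarrow> 'v set \<Rightarrow> bool" where
  "completion scale br M C \<longleftrightarrow> lie_subalgebra scale br C \<and> \<not> C \<subseteq> M \<and>
     (\<forall>D. lie_subalgebra scale br D \<and> D \<subset> C \<and> lie_ideal scale br D \<longrightarrow> D \<subseteq> M)"

definition index_complex :: "('k::field \<Rightarrow> 'v::ab_group_add \<Rightarrow> 'v) \<Rightarrow> ('v \<Rightarrow> 'v \<Rightarrow> 'v) \<Rightarrow> 'v set \<Rightarrow> 'v set set" where
  "index_complex scale br M = {C. completion scale br M C}"

end

theory Submission
  imports Defs
begin

theorem lemma1p1: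
  fixes scale :: "'k::field \<Rightarrow> 'v::ab_group_add \<Rightarrow> 'v"
    and br :: "'v \<Rightarrow> 'v \<Rightarrow> 'v"
    and M :: "'v set"
  assumes "lie_algebra scale br"
    and "fin_dim scale"
    and "maximal_subalgebra scale br M"
  shows "index_complex scale br M \<noteq> {} \<and> (\<exists>C\<in>index_complex scale br M. lie_ideal scale br C)"
proof -
  have vs: "vector_space scale" using assms(1) by (simp add: lie_algebra_def)
  obtain B0 where B0: "finite B0" "module.span scale B0 = UNIV"
    using assms(2) by (auto simp: fin_dim_def)
  obtain B where B: "B \<subseteq> B0" "module.independent scale B" "B0 \<subseteq> module.span scale B"
    using vector_space.maximal_independent_subset[OF vs, of B0] by blast
  have spB: "module.span scale B = UNIV"
  proof -
    interpret v: vector_space scale by (rule vs)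
    show ?thesis using B0(2) B(3) by (metis v.span_mono v.span_span top.extremum_uniqueI)
  qed
  interpret fd: finite_dimensional_vector_space scale B
    apply (rule finite_dimensional_vector_space.intro[OF vs])
    apply unfold_locales
    using B B0 spB finite_subset by auto
  define P where "P C \<longleftrightarrow> lie_ideal scale br C \<and> \<not> C \<subseteq> M" for C
  have PU: "P UNIV"
    using assms(3) fd.subspace_UNIV
    by (auto simp: P_def lie_ideal_def maximal_subalgebra_def)
  have "\<exists>n. \<exists>C. P C \<and> fd.dim C = n" using PU by blast
  then obtain n where n: "\<exists>C. P C \<and> fd.dim C = n" and nmin: "\<And>m. m < n \<Longrightarrow> \<not> (\<exists>C. P C \<and> fd.dim C = m)"
    using exists_least_iff[of "\<lambda>n. \<exists>C. P C \<and> fd.dim C = n"] by blast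
  then obtain C where C: "P C" "fd.dim C = n" by blast
  have comp: "completion scale br M C"
    unfolding completion_def
  proof (intro conjI allI impI)
    show "lie_subalgebra scale br C" using C(1) by (auto simp: P_def lie_ideal_def lie_subalgebra_def)
    show "\<not> C \<subseteq> M" using C(1) by (auto simp: P_def)
  next
    fix D assume D: "lie_subalgebra scale br D \<and> D \<subset> C \<and> lie_ideal scale br D"
    show "D \<subseteq> M"
    proof (rule ccontr)
      assume "\<not> D \<subseteq> M"
      then have PD: "P D" using D by (simp add: P_def)
      have sD: "fd.subspace D" and sC: "fd.subspace C"
        using D C(1) by (auto simp: lie_ideal_def P_def)
      have "fd.dim D < fd.dim C"
        using fd.dim_psubset[of D C] D fd.span_eq_iff[of D, THEN iffD2, OF sD] fd.span_eq_iff[of C, THEN iffD2, OF sC] by simp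
      then show False using nmin PD C(2) by blast
    qed
  qed
  show ?thesis using comp C(1) by (auto simp: index_complex_def P_def)
qed

end
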